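(* For $N\in\{0,1,2,\ldots\}$ and $0<s<1$, the function $x\mapsto\frac{\Gamma(x)}{\Gamma(x+N+s)}$, $x>0$, is a generalized Stieltjes function of order $N+1$.
   Context: For $\lambda>0$, a generalized Stieltjes function of order $\lambda$ is a function $f:(0,\infty)\to\mathbb R$ of the form $f(x)=\int_0^\infty\frac{d\mu(t)}{(x+t)^\lambda}+c$ with $\mu$ a positive measure on $[0,\infty)$ making the integral converge for all $x>0$ and $c\geq0$. *)

theory Defs
  imports "HOL-Analysis.Analysis"
begin

definition gen_stieltjes :: "real \<Rightarrow> (real \<Rightarrow> real) \<Rightarrow> bool" where
  "gen_stieltjes lam f \<longleftrightarrow> lam > 0 \<and>
     (\<exists>(\<mu>::real measure) (c::real).
        sets \<mu> = sets borel \<and> emeasure \<mu> {..<0} = 0 \<and> c \<ge> 0 \<and>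
        (\<forall>x>0. set_integrable \<mu> {0..} (\<lambda>t. 1 / (x + t) powr lam) \<and>
               f x = (LINT t:{0..}|\<mu>. 1 / (x + t) powr lam) + c))"

end

theory Submission imports Defs begin

definition cf :: "real \<Rightarrow> nat \<Rightarrow> real" where
  "cf s k = pochhammer (1 - s) k / fact k"

lemma cf_nonneg: "s < 1 \<Longrightarrow> cf s k \<ge> 0"
  unfolding cf_def by (intro divide_nonneg_pos pochhammer_nonneg) auto

lemma binom_series:
  fixes u s :: real assumes "0 \<le> u" "u < 1"
  shows "(\<lambda>k. cf s k * u ^ k) sums (1 - u) powr (s - 1)"
proof -
  have "(\<lambda>k. ((s - 1) gchoose k) * (-u) ^ k) sums (1 + (-u)) powr (s - 1)"
    by (rule gen_binomial_real) (use assms in auto)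
  moreover have "((s - 1) gchoose k) * (-u) ^ k = cf s k * u ^ k" for k
  proof -
    have m: "(-1::real)^k * (-1)^k = 1"
      by (simp flip: power_mult_distrib)
    have "((s - 1) gchoose k) * (-u) ^ k = ((-1)^k * (-1)^k) * (pochhammer (1 - s) k / fact k) * u ^ k"
      unfolding gbinomial_pochhammer power_minus[of u k] by (simp add: mult_ac)
    then show ?thesis unfolding cf_def m by simp
  qed
  ultimately show ?thesis by simp
qed

lemma term_integral:
  fixes x :: real and k :: nat assumes "x > 0" and that: "c \<ge> 0"
  shows "(\<integral>\<^sup>+u. ennreal (c * u powr (x - 1 + k)) * indicator {0<..<1} u \<partial>lborel)
     = ennreal (c / (x + k))"
proof -
  have "((\<lambda>u. u powr (x - 1 + k)) has_integral (1 powr (x - 1 + k + 1) / (x - 1 + k + 1))) {0..1}"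
    by (rule has_integral_powr_from_0) (use assms in auto)
  hence "((\<lambda>u. u powr (x - 1 + k)) has_integral (1 / (x + k))) {0<..<1}"
    by (simp add: has_integral_Icc_iff_Ioo)
  hence "((\<lambda>u. c * u powr (x - 1 + k)) has_integral (c / (x + k))) {0<..<1}"
    using has_integral_mult_right[of _ "1 / (x + k)" _ c] by simp
  thus ?thesis
    by (intro nn_integral_has_integral_lebesgue') (use that in auto)
qed

lemma beta_series:
  fixes x s :: real assumes "x > 0" "0 < s" "s < 1"
  shows "(\<lambda>k. cf s k / (x + k)) sums Beta x s"
proof -
  have hB: "((\<lambda>t. t powr (x - 1) * (1 - t) powr (s - 1)) has_integral Beta x s) {0<..<1}"
    using has_integral_Beta_real[of x s] assms by (simp add: has_integral_Icc_iff_Ioo)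
  have Bnn: "Beta x s \<ge> 0" using assms by (simp add: Beta_def)
  have "ennreal (Beta x s) = (\<integral>\<^sup>+u. ennreal (u powr (x - 1) * (1 - u) powr (s - 1)) * indicator {0<..<1} u \<partial>lborel)"
    by (rule nn_integral_has_integral_lebesgue'[OF _ hB, symmetric]) auto
  also have "\<dots> = (\<integral>\<^sup>+u. (\<Sum>k. ennreal (cf s k * u powr (x - 1 + k)) * indicator {0<..<1} u) \<partial>lborel)"
  proof (intro nn_integral_cong)
    fix u :: real
    show "ennreal (u powr (x - 1) * (1 - u) powr (s - 1)) * indicator {0<..<1} u =
         (\<Sum>k. ennreal (cf s k * u powr (x - 1 + k)) * indicator {0<..<1} u)"
    proof (cases "u \<in> {0<..<1}")
      case True
      hence u: "0 < u" "u < 1" by auto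
      have "(\<lambda>k. u powr (x - 1) * (cf s k * u ^ k)) sums (u powr (x - 1) * (1 - u) powr (s - 1))"
        by (rule sums_mult[OF binom_series]) (use u in auto)
      moreover have "u powr (x - 1) * (cf s k * u ^ k) = cf s k * u powr (x - 1 + k)" for k
        using u by (simp add: powr_add powr_realpow)
      ultimately have S: "(\<lambda>k. cf s k * u powr (x - 1 + k)) sums (u powr (x - 1) * (1 - u) powr (s - 1))"
        by simp
      have "(\<lambda>k. ennreal (cf s k * u powr (x - 1 + k))) sums ennreal (u powr (x - 1) * (1 - u) powr (s - 1))"
        using S u assms by (subst sums_ennreal) (auto intro!: mult_nonneg_nonneg cf_nonneg)
      then show ?thesis using True by (simp add: sums_iff)
    qed simp
  qed
  also have "\<dots> = (\<Sum>k. \<integral>\<^sup>+u. ennreal (cf s k * u powr (x - 1 + k)) * indicator {0<..<1} u \<partial>lborel)"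
    by (rule nn_integral_suminf) measurable
  also have "\<dots> = (\<Sum>k. ennreal (cf s k / (x + k)))"
    using assms by (subst term_integral) (auto intro: cf_nonneg)
  finally have E: "(\<Sum>k. ennreal (cf s k / (x + k))) = ennreal (Beta x s)" ..
  have nn: "\<And>k. cf s k / (x + k) \<ge> 0" using assms by (intro divide_nonneg_nonneg cf_nonneg) auto
  have sm: "summable (\<lambda>k. cf s k / (x + k))"
    by (rule summable_suminf_not_top[OF nn]) (simp add: E)
  have "ennreal (\<Sum>k. cf s k / (x + k)) = ennreal (Beta x s)"
    using E suminf_ennreal2[OF nn sm] by simp
  hence "(\<Sum>k. cf s k / (x + k)) = Beta x s"
    using Bnn nn by (simp add: suminf_nonneg[OF sm])
  with sm show ?thesis by (simp add: sums_iff)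
qed


lemma inner_integral:
  fixes y c :: real and N :: nat assumes "y > 0" "c \<ge> 0"
  shows "(\<integral>\<^sup>+v. ennreal (c * (1 / (y + v) ^ (N + 2))) * indicator {0..1} v \<partial>lborel)
     = ennreal (c / (N + 1) * (1 / y ^ (N + 1) - 1 / (y + 1) ^ (N + 1)))"
proof -
  define F where "F v = - 1 / ((N + 1) * (y + v) ^ (N + 1))" for v :: real
  have D: "(F has_vector_derivative (1 / (y + v) ^ (N + 2))) (at v within {0..1})" if "v \<in> {0..1}" for v
  proof -
    have yv: "y + v > 0" using that assms by auto
    have "(F has_real_derivative (1 / (y + v) ^ (N + 2))) (at v)"
      unfolding F_def
      by (rule derivative_eq_intros refl | use yv in simp)+
    thus ?thesis by (simp add: has_real_derivative_iff_has_vector_derivative has_vector_derivative_at_within)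
  qed
  have "((\<lambda>v. 1 / (y + v) ^ (N + 2)) has_integral (F 1 - F 0)) {0..1}"
    by (rule fundamental_theorem_of_calculus) (use D in auto)
  moreover have "F 1 - F 0 = 1 / (N + 1) * (1 / y ^ (N + 1) - 1 / (y + 1) ^ (N + 1))"
    unfolding F_def by (simp add: right_diff_distrib add.commute)
  ultimately have "((\<lambda>v. c * (1 / (y + v) ^ (N + 2))) has_integral (c / (N + 1) * (1 / y ^ (N + 1) - 1 / (y + 1) ^ (N + 1)))) {0..1}"
    using has_integral_mult_right[of _ _ "{0..1}" c] by fastforce
  thus ?thesis
    by (intro nn_integral_has_integral_lebesgue') (use assms in auto)
qed

lemma gamma_step:
  fixes x s :: real and N :: nat assumes "x > 0" "s > 0"
  shows "Gamma x / Gamma (x + N + s) - Gamma (x + 1) / Gamma (x + 1 + N + s)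
       = (N + s) * (Gamma x / Gamma (x + real (Suc N) + s))"
proof -
  have g1: "Gamma (x + 1) = x * Gamma x" using assms
    by (intro Gamma_plus1) (auto simp: nonpos_Ints_def)
  have g2: "Gamma (x + N + s + 1) = (x + N + s) * Gamma (x + N + s)" using assms
    by (intro Gamma_plus1) (auto simp: nonpos_Ints_def)
  have e1: "x + 1 + N + s = x + N + s + 1" "x + real (Suc N) + s = x + N + s + 1" by auto
  have p: "Gamma (x + N + s) > 0" using assms by auto
  have a: "x + N + s > 0" using assms by auto
  have gen: "g / G - x * g / (a * G) = (a - x) * (g / (a * G))" if "G > 0" "a > 0" for g G a :: real
    using that by (simp add: field_simps)
  show ?thesis unfolding e1 g1 g2 using gen[OF p a, of "Gamma x"] by (simp add: add.commute add.left_commute)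
qed


definition PP :: "real \<Rightarrow> nat \<Rightarrow> real measure \<Rightarrow> bool" where
 "PP s N \<mu> \<longleftrightarrow> sets \<mu> = sets borel \<and> emeasure \<mu> {..<0} = 0 \<and>
   (\<forall>x>0. (\<integral>\<^sup>+t. ennreal (1 / (x + t) ^ (N + 1)) \<partial>\<mu>) = ennreal (Gamma x / Gamma (x + N + s)))"

lemma base:
  fixes s :: real assumes "0 < s" "s < 1"
  shows "\<exists>\<mu>. PP s 0 \<mu>"
proof -
  define \<mu> where "\<mu> = distr (density (count_space UNIV) (\<lambda>k. ennreal (cf s k / Gamma s))) borel real"
  have "sets \<mu> = sets borel" unfolding \<mu>_def by simp
  moreover have "emeasure \<mu> {..<0} = 0"
    unfolding \<mu>_def by (subst emeasure_distr) (auto simp: vimage_def)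
  moreover have "(\<integral>\<^sup>+t. ennreal (1 / (x + t) ^ (0 + 1)) \<partial>\<mu>) = ennreal (Gamma x / Gamma (x + real 0 + s))"
    if x: "x > 0" for x
  proof -
    have "(\<integral>\<^sup>+t. ennreal (1 / (x + t) ^ (0 + 1)) \<partial>\<mu>)
        = (\<integral>\<^sup>+k. ennreal (1 / (x + real k)) \<partial>density (count_space UNIV) (\<lambda>k. ennreal (cf s k / Gamma s)))"
      unfolding \<mu>_def by (subst nn_integral_distr) auto
    also have "\<dots> = (\<integral>\<^sup>+k. ennreal (cf s k / Gamma s) * ennreal (1 / (x + real k)) \<partial>count_space UNIV)"
      by (subst nn_integral_density) auto
    also have "\<dots> = (\<Sum>k. ennreal (cf s k / (x + real k) / Gamma s))"
    proof (subst nn_integral_count_space_nat, rule suminf_cong)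
      fix k
      have e: "cf s k / (x + real k) / Gamma s = (cf s k / Gamma s) * (1 / (x + real k))" by simp
      show "ennreal (cf s k / Gamma s) * ennreal (1 / (x + real k)) = ennreal (cf s k / (x + real k) / Gamma s)"
        unfolding e using x assms cf_nonneg[of s k] by (intro ennreal_mult[symmetric]) auto
    qed
    also have "\<dots> = ennreal (Beta x s / Gamma s)"
    proof -
      have "(\<lambda>k. cf s k / (x + real k) / Gamma s) sums (Beta x s / Gamma s)"
        by (intro sums_divide beta_series) (use x assms in auto)
      hence "(\<lambda>k. ennreal (cf s k / (x + real k) / Gamma s)) sums ennreal (Beta x s / Gamma s)"
        using x assms by (subst sums_ennreal) (auto intro!: divide_nonneg_nonneg cf_nonneg simp: Beta_def)
      thus ?thesis by (simp add: sums_iff)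
    qed
    also have "Beta x s / Gamma s = Gamma x / Gamma (x + real 0 + s)"
    proof -
      have "Gamma s \<noteq> 0" using assms Gamma_real_pos[of s] by linarith
      thus ?thesis by (simp add: Beta_def)
    qed
    finally show ?thesis .
  qed
  ultimately show ?thesis unfolding PP_def by blast
qed


lemma step:
  fixes s :: real assumes "0 < s" and P: "PP s N \<mu>"
  shows "\<exists>\<mu>'. PP s (Suc N) \<mu>'"
proof -
  have sets\<mu> [measurable_cong]: "sets \<mu> = sets borel" and null: "emeasure \<mu> {..<0} = 0"
    and I: "\<And>x. x > 0 \<Longrightarrow> (\<integral>\<^sup>+t. ennreal (1 / (x + t) ^ (N + 1)) \<partial>\<mu>) = ennreal (Gamma x / Gamma (x + N + s))"
    using P unfolding PP_def by auto
  have sp: "space \<mu> = UNIV" using sets_eq_imp_space_eq[OF sets\<mu>] by simp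
  have AEpos: "AE t in \<mu>. t \<ge> 0"
    by (subst AE_iff_measurable[of "{..<0}"]) (auto simp: sp sets\<mu> null)
  define c where "c = (real N + 1) / (real N + s)"
  have c0: "c \<ge> 0" unfolding c_def using assms by auto
  define \<mu>' where "\<mu>' = distr (density (\<mu> \<Otimes>\<^sub>M lborel) (\<lambda>p. ennreal c * indicator {0..1} (snd p))) borel (\<lambda>p. fst p + snd p)"
  have sets': "sets \<mu>' = sets borel" unfolding \<mu>'_def by simp
  have key: "(\<integral>\<^sup>+t. g t \<partial>\<mu>') = (\<integral>\<^sup>+t. \<integral>\<^sup>+v. ennreal c * indicator {0..1} v * g (t + v) \<partial>lborel \<partial>\<mu>)"
    if g[measurable]: "g \<in> borel_measurable borel" for g
  proof -
    have "(\<integral>\<^sup>+t. g t \<partial>\<mu>') = (\<integral>\<^sup>+p. g (fst p + snd p) \<partial>density (\<mu> \<Otimes>\<^sub>M lborel) (\<lambda>p. ennreal c * indicator {0..1} (snd p)))"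
      unfolding \<mu>'_def by (subst nn_integral_distr) auto
    also have "\<dots> = (\<integral>\<^sup>+p. ennreal c * indicator {0..1} (snd p) * g (fst p + snd p) \<partial>(\<mu> \<Otimes>\<^sub>M lborel))"
      by (subst nn_integral_density) auto
    also have "\<dots> = (\<integral>\<^sup>+t. \<integral>\<^sup>+v. ennreal c * indicator {0..1} v * g (t + v) \<partial>lborel \<partial>\<mu>)"
      by (subst lborel.nn_integral_fst[symmetric]) auto
    finally show ?thesis .
  qed
  have null': "emeasure \<mu>' {..<0} = 0"
  proof -
    have "emeasure \<mu>' {..<0} = (\<integral>\<^sup>+t. indicator {..<0} t \<partial>\<mu>')" by (simp add: sets')
    also have "\<dots> = (\<integral>\<^sup>+t. \<integral>\<^sup>+v. ennreal c * indicator {0..1} v * indicator {..<0} (t + v) \<partial>lborel \<partial>\<mu>)"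
      by (rule key) simp
    also have "\<dots> = (\<integral>\<^sup>+t. 0 \<partial>\<mu>)"
    proof (rule nn_integral_cong_AE)
      show "AE t in \<mu>. (\<integral>\<^sup>+v. ennreal c * indicator {0..1} v * indicator {..<0} (t + v) \<partial>lborel) = 0"
        using AEpos
      proof eventually_elim
        case (elim t)
        have "(\<integral>\<^sup>+v. ennreal c * indicator {0..1} v * indicator {..<0} (t + v) \<partial>lborel) = (\<integral>\<^sup>+(v::real). 0 \<partial>lborel)"
          using elim by (intro nn_integral_cong) (auto split: split_indicator)
        thus ?case by simp
      qed
    qed
    finally show ?thesis by simp
  qed
  have main: "(\<integral>\<^sup>+t. ennreal (1 / (x + t) ^ (Suc N + 1)) \<partial>\<mu>') = ennreal (Gamma x / Gamma (x + real (Suc N) + s))"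
    if x: "x > 0" for x
  proof -
    define a where "a t = 1 / (x + t) ^ (N + 1)" for t
    define b where "b t = 1 / (x + 1 + t) ^ (N + 1)" for t
    have ab: "a t \<ge> b t" "b t \<ge> 0" if "t \<ge> 0" for t
    proof -
      have "(x + t) ^ (N + 1) \<le> (x + 1 + t) ^ (N + 1)" by (rule power_mono) (use x that in auto)
      moreover have "(x + t) ^ (N + 1) > 0" using x that by auto
      ultimately show "a t \<ge> b t" "b t \<ge> 0" unfolding a_def b_def
        by (auto intro!: divide_left_mono)
    qed
    have "(\<integral>\<^sup>+t. ennreal (1 / (x + t) ^ (Suc N + 1)) \<partial>\<mu>')
       = (\<integral>\<^sup>+t. \<integral>\<^sup>+v. ennreal c * indicator {0..1} v * ennreal (1 / (x + (t + v)) ^ (Suc N + 1)) \<partial>lborel \<partial>\<mu>)"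
      by (rule key) simp
    also have "\<dots> = (\<integral>\<^sup>+t. ennreal (1 / (N + s)) * ennreal (a t - b t) \<partial>\<mu>)"
    proof (rule nn_integral_cong_AE)
      show "AE t in \<mu>. (\<integral>\<^sup>+v. ennreal c * indicator {0..1} v * ennreal (1 / (x + (t + v)) ^ (Suc N + 1)) \<partial>lborel)
          = ennreal (1 / (N + s)) * ennreal (a t - b t)"
        using AEpos
      proof eventually_elim
        case (elim t)
        have "(\<integral>\<^sup>+v. ennreal c * indicator {0..1} v * ennreal (1 / (x + (t + v)) ^ (Suc N + 1)) \<partial>lborel)
            = (\<integral>\<^sup>+v. ennreal (c * (1 / ((x + t) + v) ^ (N + 2))) * indicator {0..1} v \<partial>lborel)"
        proof (intro nn_integral_cong)
          fix v :: real
          show "ennreal c * indicator {0..1} v * ennreal (1 / (x + (t + v)) ^ (Suc N + 1)) =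
                ennreal (c * (1 / ((x + t) + v) ^ (N + 2))) * indicator {0..1} v"
          proof (cases "v \<in> {0..1}")
            case True
            have q: "1 / (x + (t + v)) ^ (Suc N + 1) \<ge> 0" using True x elim by auto
            have e: "(x + t) + v = x + (t + v)" "N + 2 = Suc N + 1" by auto
            have "ennreal c * indicator {0..1} v * ennreal (1 / (x + (t + v)) ^ (Suc N + 1))
                = ennreal c * ennreal (1 / (x + (t + v)) ^ (Suc N + 1))" using True by simp
            also have "\<dots> = ennreal (c * (1 / (x + (t + v)) ^ (Suc N + 1)))"
              by (rule ennreal_mult[OF c0 q, symmetric])
            also have "\<dots> = ennreal (c * (1 / ((x + t) + v) ^ (N + 2))) * indicator {0..1} v"
              using True unfolding e by simp
            finally show ?thesis .
          qed simp
        qed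
        also have "\<dots> = ennreal (c / (N + 1) * (1 / (x + t) ^ (N + 1) - 1 / ((x + t) + 1) ^ (N + 1)))"
          by (rule inner_integral) (use x elim c0 in auto)
        also have "c / (N + 1) = 1 / (N + s)" 
        proof -
          have g: "a / b / a = 1 / b" if "a \<noteq> 0" "b \<noteq> 0" for a b :: real using that by simp
          have "real N + s \<noteq> 0" using assms by (metis add_nonneg_pos of_nat_0_le_iff order_less_irrefl)
          moreover have "real (N + 1) = real N + 1" by simp
          ultimately show ?thesis unfolding c_def using g[of "real N + 1" "real N + s"] by (simp only:) simp
        qed
        also have "ennreal (1 / (N + s) * (1 / (x + t) ^ (N + 1) - 1 / ((x + t) + 1) ^ (N + 1)))
            = ennreal (1 / (N + s)) * ennreal (a t - b t)"
          unfolding a_def b_def using ab[OF elim] assms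
          by (subst ennreal_mult[symmetric]) (auto simp: a_def b_def add_ac)
        finally show ?case .
      qed
    qed
    also have "\<dots> = ennreal (1 / (N + s)) * (\<integral>\<^sup>+t. ennreal (a t - b t) \<partial>\<mu>)"
      by (rule nn_integral_cmult) (simp add: a_def b_def)
    also have "(\<integral>\<^sup>+t. ennreal (a t - b t) \<partial>\<mu>) = ennreal (Gamma x / Gamma (x + N + s) - Gamma (x + 1) / Gamma (x + 1 + N + s))"
    proof -
      have "ennreal (Gamma x / Gamma (x + N + s)) = (\<integral>\<^sup>+t. ennreal (a t) \<partial>\<mu>)"
        unfolding a_def by (rule I[OF x, symmetric])
      also have "\<dots> = (\<integral>\<^sup>+t. ennreal (a t - b t) + ennreal (b t) \<partial>\<mu>)"
        using AEpos by (intro nn_integral_cong_AE) (auto elim!: eventually_mono simp: ab ennreal_plus[symmetric])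
      also have "\<dots> = (\<integral>\<^sup>+t. ennreal (a t - b t) \<partial>\<mu>) + (\<integral>\<^sup>+t. ennreal (b t) \<partial>\<mu>)"
        by (rule nn_integral_add) (auto simp: a_def b_def)
      also have "(\<integral>\<^sup>+t. ennreal (b t) \<partial>\<mu>) = ennreal (Gamma (x + 1) / Gamma (x + 1 + N + s))"
        unfolding b_def by (rule I) (use x in auto)
      finally have "ennreal (Gamma x / Gamma (x + N + s)) = (\<integral>\<^sup>+t. ennreal (a t - b t) \<partial>\<mu>) + ennreal (Gamma (x + 1) / Gamma (x + 1 + N + s))" .
      hence "(\<integral>\<^sup>+t. ennreal (a t - b t) \<partial>\<mu>) = ennreal (Gamma x / Gamma (x + N + s)) - ennreal (Gamma (x + 1) / Gamma (x + 1 + N + s))"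
        by simp
      also have "\<dots> = ennreal (Gamma x / Gamma (x + N + s) - Gamma (x + 1) / Gamma (x + 1 + N + s))"
        using x assms by (intro ennreal_minus) auto
      finally show ?thesis .
    qed
    also have "Gamma x / Gamma (x + N + s) - Gamma (x + 1) / Gamma (x + 1 + N + s) = (N + s) * (Gamma x / Gamma (x + real (Suc N) + s))"
      by (rule gamma_step) (use x assms in auto)
    also have "ennreal (1 / (N + s)) * ennreal ((N + s) * (Gamma x / Gamma (x + real (Suc N) + s))) = ennreal (Gamma x / Gamma (x + real (Suc N) + s))"
    proof -
      define q where "q = Gamma x / Gamma (x + real (Suc N) + s)"
      have q0: "q \<ge> 0" unfolding q_def using x assms by (intro divide_nonneg_nonneg Gamma_real_nonneg) auto
      have ns: "real N + s > 0" using assms by auto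
      have e: "1 / (real N + s) * ((real N + s) * q) = q" using ns by simp
      have "ennreal (1 / (N + s)) * ennreal ((N + s) * q) = ennreal (1 / (N + s) * ((N + s) * q))"
        by (rule ennreal_mult[symmetric]) (use ns q0 in auto)
      thus ?thesis unfolding q_def[symmetric] e by simp
    qed
    finally show ?thesis .
  qed
  show ?thesis unfolding PP_def using sets' null' main by blast
qed


lemma all_PP: "0 < s \<Longrightarrow> s < 1 \<Longrightarrow> \<exists>\<mu>. PP s N \<mu>"
proof (induction N)
  case 0 thus ?case using base by blast
next
  case (Suc N) thus ?case using step by blast
qed

theorem proposition4p6:
  fixes N :: nat and s :: real
  assumes "0 < s" and "s < 1"
  shows "gen_stieltjes (real N + 1) (\<lambda>x. Gamma x / Gamma (x + real N + s))"
proof -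
  obtain \<mu> where P: "PP s N \<mu>" using all_PP assms by blast
  have sets\<mu> [measurable_cong]: "sets \<mu> = sets borel" and null: "emeasure \<mu> {..<0} = 0"
    and I: "\<And>x. x > 0 \<Longrightarrow> (\<integral>\<^sup>+t. ennreal (1 / (x + t) ^ (N + 1)) \<partial>\<mu>) = ennreal (Gamma x / Gamma (x + N + s))"
    using P unfolding PP_def by auto
  have sp: "space \<mu> = UNIV" using sets_eq_imp_space_eq[OF sets\<mu>] by simp
  have AEpos: "AE t in \<mu>. t \<ge> 0"
    by (subst AE_iff_measurable[of "{..<0}"]) (auto simp: sp sets\<mu> null)
  have X: "set_integrable \<mu> {0..} (\<lambda>t. 1 / (x + t) powr (real N + 1)) \<and>
        Gamma x / Gamma (x + real N + s) = (LINT t:{0..}|\<mu>. 1 / (x + t) powr (real N + 1)) + 0"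
    if x: "x > 0" for x
  proof -
    let ?f = "\<lambda>t. indicator {0..} t *\<^sub>R (1 / (x + t) powr (real N + 1))"
    have fm: "?f \<in> borel_measurable \<mu>" by measurable
    have fnn: "AE t in \<mu>. 0 \<le> ?f t" by (auto split: split_indicator)
    have eq: "(\<integral>\<^sup>+t. ennreal (?f t) \<partial>\<mu>) = ennreal (Gamma x / Gamma (x + N + s))"
    proof -
      have "(\<integral>\<^sup>+t. ennreal (?f t) \<partial>\<mu>) = (\<integral>\<^sup>+t. ennreal (1 / (x + t) ^ (N + 1)) \<partial>\<mu>)"
      proof (rule nn_integral_cong_AE)
        show "AE t in \<mu>. ennreal (?f t) = ennreal (1 / (x + t) ^ (N + 1))"
          using AEpos
        proof eventually_elim
          case (elim t)
          have "x + t > 0" using x elim by auto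
          hence "(x + t) powr (real N + 1) = (x + t) ^ (N + 1)"
            using powr_realpow[of "x + t" "N + 1"] by (simp add: add.commute)
          thus ?case using elim by simp
        qed
      qed
      also have "\<dots> = ennreal (Gamma x / Gamma (x + N + s))" by (rule I[OF x])
      finally show ?thesis .
    qed
    have int: "integrable \<mu> ?f"
      by (rule integrableI_nn_integral_finite[OF fm fnn eq])
    have "integral\<^sup>L \<mu> ?f = enn2real (\<integral>\<^sup>+t. ennreal (?f t) \<partial>\<mu>)"
      by (rule integral_eq_nn_integral[OF fm fnn])
    also have "\<dots> = Gamma x / Gamma (x + N + s)"
      unfolding eq using x assms by (intro enn2real_ennreal divide_nonneg_nonneg Gamma_real_nonneg) auto
    finally show ?thesis using int unfolding set_integrable_def set_lebesgue_integral_def by simp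
  qed
  show ?thesis unfolding gen_stieltjes_def
    using sets\<mu> null X by (intro conjI exI[of _ \<mu>] exI[of _ 0]) auto
qed

end
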